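(* Let $\mathcal{P}_{n,k}$ be the set of all CPWL functions $p\colon\mathbb{R}^n\to\mathbb{R}$ with exactly $k$ distinct linear components, and for $p\in\mathcal{P}_{n,k}$ let $\mathcal{C}_{n,k}(p)$ be the collection of all families of closed convex subsets of $\mathbb{R}^n$ whose union is $\mathbb{R}^n$ and on each of which $p$ is affine. Then $k\leq\min_{\mathcal{Q}\in\mathcal{C}_{n,k}(p)}|\mathcal{Q}|\leq\phi(n,k)$, where $\phi(n,k)=\min\left(\sum_{i=0}^n \binom{(k^2-k)/2}{i},\,k!\right)$.
   Context: A function $p\colon\mathbb{R}^n\to\mathbb{R}$ is CPWL (continuous piecewise linear) if there exist finitely many closed subsets $\mathcal{U}_1,\dots,\mathcal{U}_m$ of $\mathbb{R}^n$ whose union is $\mathbb{R}^n$ and such that $p$ is affine on each $\mathcal{U}_i$. An affine function $f$ is a linear component of $p$ if there is a nonempty subfamily of a minimum-size family of such closed subsets on whose union $f=p$. *)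

theory Defs
  imports "HOL-Analysis.Analysis"
begin

text \<open>Functions on R^n are modelled as functions on real^'n, with n = CARD('n).\<close>

definition affine_fun :: "(real^'n \<Rightarrow> real) \<Rightarrow> bool" where
  "affine_fun f \<longleftrightarrow> (\<exists>a b. \<forall>x. f x = inner a x + b)"

definition affine_on_set :: "(real^'n \<Rightarrow> real) \<Rightarrow> (real^'n) set \<Rightarrow> bool" where
  "affine_on_set p S \<longleftrightarrow> (\<exists>f. affine_fun f \<and> (\<forall>x\<in>S. p x = f x))"

definition cpwl_cover :: "(real^'n \<Rightarrow> real) \<Rightarrow> (real^'n) set set \<Rightarrow> bool" where
  "cpwl_cover p U \<longleftrightarrow> finite U \<and> (\<forall>S\<in>U. closed S \<and> affine_on_set p S) \<and> \<Union>U = UNIV"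

definition is_cpwl :: "(real^'n \<Rightarrow> real) \<Rightarrow> bool" where
  "is_cpwl p \<longleftrightarrow> (\<exists>U. cpwl_cover p U)"

definition min_pieces :: "(real^'n \<Rightarrow> real) \<Rightarrow> nat" where
  "min_pieces p = (LEAST m. \<exists>U. cpwl_cover p U \<and> card U = m)"

definition linear_components :: "(real^'n \<Rightarrow> real) \<Rightarrow> (real^'n \<Rightarrow> real) set" where
  "linear_components p = {f. affine_fun f \<and>
      (\<exists>U. cpwl_cover p U \<and> card U = min_pieces p \<and>
         (\<exists>V. V \<subseteq> U \<and> V \<noteq> {} \<and> (\<forall>x\<in>\<Union>V. f x = p x)))}"

definition convex_covers :: "(real^'n \<Rightarrow> real) \<Rightarrow> (real^'n) set set set" where
  "convex_covers p = {Q. (\<forall>S\<in>Q. closed S \<and> convex S \<and> affine_on_set p S) \<and> \<Union>Q = UNIV}"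

definition phi :: "nat \<Rightarrow> nat \<Rightarrow> nat" where
  "phi n k = min (\<Sum>i=0..n. ((k^2 - k) div 2) choose i) (fact k)"

end

theory Submission
  imports Defs "HOL-Combinatorics.Permutations"
begin

definition shatters :: "'a set set \<Rightarrow> 'a set \<Rightarrow> bool" where
  "shatters F J \<longleftrightarrow> (\<forall>B\<subseteq>J. \<exists>S\<in>F. S \<inter> J = B)"

lemma pajor:
  assumes "finite X" "F \<subseteq> Pow X"
  shows "card F \<le> card {J. J \<subseteq> X \<and> shatters F J}"
  using assms
proof (induction X arbitrary: F rule: finite_induct)
  case empty
  then have "F \<subseteq> {{}}" by auto
  show ?case
  proof (cases "F = {}")
    case True then show ?thesis by simp
  next
    case False
    then have "F = {{}}" using \<open>F \<subseteq> {{}}\<close> by auto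
    then have "{J. J \<subseteq> {} \<and> shatters F J} = {{}}" by (auto simp: shatters_def)
    then show ?thesis using \<open>F = {{}}\<close> by simp
  qed
next
  case (insert x X F)
  define Fa where "Fa = {S\<in>F. x \<notin> S}"
  define Fb where "Fb = (\<lambda>S. S - {x}) ` {S\<in>F. x \<in> S}"
  have finF: "finite F" using insert.prems insert.hyps(1) by (meson finite_Pow_iff finite_insert finite_subset)
  have FaX: "Fa \<subseteq> Pow X" using insert.prems by (auto simp: Fa_def)
  have FbX: "Fb \<subseteq> Pow X" using insert.prems by (auto simp: Fb_def)
  have injb: "inj_on (\<lambda>S. S - {x}) {S\<in>F. x \<in> S}"
    by (auto simp: inj_on_def)
  have cardF: "card F = card Fa + card Fb"
  proof -
    have "F = Fa \<union> {S\<in>F. x \<in> S}" by (auto simp: Fa_def)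
    moreover have "Fa \<inter> {S\<in>F. x \<in> S} = {}" by (auto simp: Fa_def)
    moreover have "card (Fa \<union> {S\<in>F. x \<in> S}) = card Fa + card {S\<in>F. x \<in> S}"
      by (rule card_Un_disjoint) (use finF \<open>Fa \<inter> {S\<in>F. x \<in> S} = {}\<close> in \<open>auto simp: Fa_def\<close>)
    ultimately have "card F = card Fa + card {S\<in>F. x \<in> S}" by simp
    moreover have "card Fb = card {S\<in>F. x \<in> S}" unfolding Fb_def using injb by (rule card_image)
    ultimately show ?thesis by simp
  qed
  define SA where "SA = {J. J \<subseteq> X \<and> shatters Fa J}"
  define SB where "SB = {J. J \<subseteq> X \<and> shatters Fb J}"
  define SF where "SF = {J. J \<subseteq> insert x X \<and> shatters F J}"
  have finP: "finite (Pow (insert x X))" using insert by simp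
  have fSA: "finite SA" "finite SB" using insert(1) by (auto simp: SA_def SB_def)
  have fSF: "finite SF" by (rule finite_subset[OF _ finP]) (auto simp: SF_def)
  have sub1: "SA \<union> SB \<subseteq> {J\<in>SF. x \<notin> J}"
  proof
    fix J assume "J \<in> SA \<union> SB"
    then show "J \<in> {J\<in>SF. x \<notin> J}"
    proof
      assume J: "J \<in> SA"
      then have "x \<notin> J" using insert(2) by (auto simp: SA_def)
      moreover have "shatters F J"
        unfolding shatters_def
      proof (intro allI impI)
        fix B assume "B \<subseteq> J"
        then obtain S where "S \<in> Fa" "S \<inter> J = B" using J unfolding SA_def shatters_def by blast
        then show "\<exists>S\<in>F. S \<inter> J = B" by (auto simp: Fa_def)
      qed
      ultimately show ?thesis using J unfolding SA_def SF_def by blast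
    next
      assume J: "J \<in> SB"
      then have "x \<notin> J" using insert(2) by (auto simp: SB_def)
      moreover have "shatters F J"
        unfolding shatters_def
      proof (intro allI impI)
        fix B assume "B \<subseteq> J"
        then obtain S' where "S' \<in> Fb" "S' \<inter> J = B" using J unfolding SB_def shatters_def by blast
        then obtain S where "S \<in> F" "S' = S - {x}" by (auto simp: Fb_def)
        then show "\<exists>S\<in>F. S \<inter> J = B" using \<open>S' \<inter> J = B\<close> \<open>x \<notin> J\<close> by (intro bexI[of _ S]) auto
      qed
      ultimately show ?thesis using J unfolding SB_def SF_def by blast
    qed
  qed
  have sub2: "insert x ` (SA \<inter> SB) \<subseteq> {J\<in>SF. x \<in> J}"
  proof
    fix J' assume "J' \<in> insert x ` (SA \<inter> SB)"
    then obtain J where J': "J' = insert x J" and JA: "J \<in> SA" and JB: "J \<in> SB" by auto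
    have xJ: "x \<notin> J" using JA insert(2) by (auto simp: SA_def)
    have "shatters F (insert x J)"
      unfolding shatters_def
    proof (intro allI impI)
      fix B assume B: "B \<subseteq> insert x J"
      show "\<exists>S\<in>F. S \<inter> insert x J = B"
      proof (cases "x \<in> B")
        case True
        have "B - {x} \<subseteq> J" using B by auto
        then obtain S' where "S' \<in> Fb" "S' \<inter> J = B - {x}" using JB unfolding SB_def shatters_def by blast
        then obtain S where "S \<in> F" "x \<in> S" "S' = S - {x}" by (auto simp: Fb_def)
        then show ?thesis using \<open>S' \<inter> J = B - {x}\<close> True xJ by (intro bexI[of _ S]) auto
      next
        case False
        have "B \<subseteq> J" using B False by auto
        then obtain S where "S \<in> Fa" "S \<inter> J = B" using JA unfolding SA_def shatters_def by blast
        then show ?thesis using False by (intro bexI[of _ S]) (auto simp: Fa_def)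
      qed
    qed
    then show "J' \<in> {J\<in>SF. x \<in> J}" using J' JA by (auto simp: SA_def SF_def)
  qed
  have injx: "inj_on (insert x) (SA \<inter> SB)"
  proof (rule inj_onI)
    fix A B assume "A \<in> SA \<inter> SB" "B \<in> SA \<inter> SB" "insert x A = insert x B"
    moreover have "x \<notin> A" "x \<notin> B" using calculation insert(2) by (auto simp: SA_def)
    ultimately show "A = B" by (metis Diff_insert_absorb)
  qed
  have "card Fa + card Fb \<le> card SA + card SB"
    using insert.IH[OF FaX] insert.IH[OF FbX] by (simp add: SA_def SB_def)
  also have "\<dots> = card (SA \<union> SB) + card (SA \<inter> SB)" using fSA card_Un_Int by blast
  also have "\<dots> \<le> card {J\<in>SF. x \<notin> J} + card {J\<in>SF. x \<in> J}"
  proof (rule add_mono)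
    show "card (SA \<union> SB) \<le> card {J\<in>SF. x \<notin> J}" using sub1 fSF by (intro card_mono) auto
    have "card (SA \<inter> SB) = card (insert x ` (SA \<inter> SB))" using injx by (simp add: card_image)
    also have "\<dots> \<le> card {J\<in>SF. x \<in> J}" using sub2 fSF by (intro card_mono) auto
    finally show "card (SA \<inter> SB) \<le> card {J\<in>SF. x \<in> J}" .
  qed
  also have "\<dots> = card SF"
  proof -
    have "SF = {J\<in>SF. x \<notin> J} \<union> {J\<in>SF. x \<in> J}" by auto
    moreover have "{J\<in>SF. x \<notin> J} \<inter> {J\<in>SF. x \<in> J} = {}" by auto
    moreover have "card ({J\<in>SF. x \<notin> J} \<union> {J\<in>SF. x \<in> J}) = card {J\<in>SF. x \<notin> J} + card {J\<in>SF. x \<in> J}"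
      by (rule card_Un_disjoint) (use fSF in auto)
    ultimately show ?thesis by simp
  qed
  finally show ?case using cardF by (simp add: SF_def)
qed

lemma card_subsets_le:
  assumes "finite X"
  shows "card {J. J \<subseteq> X \<and> card J \<le> n} = (\<Sum>i=0..n. card X choose i)"
proof -
  define A where "A = (\<lambda>i. {J. J \<subseteq> X \<and> card J = i})"
  have eq: "{J. J \<subseteq> X \<and> card J \<le> n} = (\<Union>i\<in>{0..n}. A i)"
  proof (intro equalityI subsetI)
    fix J assume "J \<in> {J. J \<subseteq> X \<and> card J \<le> n}"
    then show "J \<in> (\<Union>i\<in>{0..n}. A i)" unfolding A_def by (intro UN_I[of "card J"]) auto
  next
    fix J assume "J \<in> (\<Union>i\<in>{0..n}. A i)"
    then show "J \<in> {J. J \<subseteq> X \<and> card J \<le> n}" unfolding A_def by auto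
  qed
  have fin: "finite (A i)" for i
    unfolding A_def by (rule finite_subset[of _ "Pow X"]) (use assms in auto)
  have "card (\<Union>i\<in>{0..n}. A i) = (\<Sum>i=0..n. card (A i))"
    by (rule card_UN_disjoint) (simp_all add: fin, auto simp: A_def)
  moreover have "card (A i) = card X choose i" for i unfolding A_def using n_subsets[OF assms] .
  ultimately show ?thesis using eq by simp
qed

lemma card_pairs: "card {(i::nat,j). i < j \<and> j < k} = k choose 2"
proof (induction k)
  case 0 then show ?case by simp
next
  case (Suc k)
  define P where "P = {(i::nat,j). i < j \<and> j < k}"
  have eq: "{(i::nat,j). i < j \<and> j < Suc k} = P \<union> (\<lambda>i. (i,k)) ` {..<k}"
    unfolding P_def by (auto simp: less_Suc_eq)
  have fin: "finite P"
    unfolding P_def by (rule finite_subset[of _ "{..<k} \<times> {..<k}"]) auto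
  have dis: "P \<inter> (\<lambda>i. (i,k)) ` {..<k} = {}" unfolding P_def by auto
  have "card (P \<union> (\<lambda>i. (i,k)) ` {..<k}) = card P + card ((\<lambda>i. (i,k)) ` {..<k})"
    by (rule card_Un_disjoint) (use fin dis in auto)
  also have "card ((\<lambda>i. (i,k)) ` {..<k}) = k" by (subst card_image) (auto simp: inj_on_def)
  finally have "card {(i::nat,j). i < j \<and> j < Suc k} = (k choose 2) + k"
    using Suc eq by (simp add: P_def)
  then show ?case by (simp add: numeral_2_eq_2 add.commute)
qed


lemma affine_fun_eq_on_open:
  fixes f g :: "real^'n \<Rightarrow> real"
  assumes "affine_fun f" "affine_fun g" "open W" "W \<noteq> {}" "\<forall>x\<in>W. f x = g x"
  shows "f = g"
proof -
  obtain a b where f: "\<And>x. f x = inner a x + b" using assms(1) unfolding affine_fun_def by blast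
  obtain a' b' where g: "\<And>x. g x = inner a' x + b'" using assms(2) unfolding affine_fun_def by blast
  obtain z where z: "z \<in> W" using assms(4) by blast
  obtain r where r: "r > 0" "ball z r \<subseteq> W" using assms(3) z open_contains_ball by blast
  define w where "w = a - a'"
  have d: "\<And>x. x \<in> W \<Longrightarrow> inner w x + (b - b') = 0"
    using assms(5) f g by (simp add: w_def inner_diff_left algebra_simps)
  have "w = 0"
  proof (rule ccontr)
    assume "w \<noteq> 0"
    define y where "y = z + (r / (2 * norm w)) *\<^sub>R w"
    have "dist z y = r / 2" using \<open>w \<noteq> 0\<close> r(1) by (simp add: y_def dist_norm)
    then have "y \<in> W" using r by auto
    have "inner w y + (b - b') = (inner w z + (b - b')) + (r / (2 * norm w)) * inner w w"
      by (simp add: y_def inner_add_right algebra_simps)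
    then have "(r / (2 * norm w)) * inner w w = 0" using d[OF \<open>y \<in> W\<close>] d[OF z] by simp
    then show False using \<open>w \<noteq> 0\<close> r(1) by simp
  qed
  then have "b = b'" using d[OF z] by simp
  then show ?thesis using \<open>w = 0\<close> by (auto simp: fun_eq_iff f g w_def)
qed

lemma closed_cover_interior:
  fixes U :: "'a::topological_space set set"
  assumes "finite U" "\<forall>S\<in>U. closed S" "open B" "B \<noteq> {}" "B \<subseteq> \<Union>U"
  shows "\<exists>S\<in>U. interior S \<inter> B \<noteq> {}"
  using assms
proof (induction U arbitrary: B rule: finite_induct)
  case empty then show ?case by auto
next
  case (insert S U B)
  show ?case
  proof (cases "B \<subseteq> S")
    case True
    then have "B \<subseteq> interior S" using insert.prems(2) by (simp add: interior_maximal)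
    then show ?thesis using insert.prems(3) by blast
  next
    case False
    have "open (B - S)" using insert.prems by (simp add: open_Diff)
    moreover have "B - S \<noteq> {}" using False by blast
    moreover have "B - S \<subseteq> \<Union>U" using insert.prems(4) by blast
    ultimately obtain S' where "S' \<in> U" "interior S' \<inter> (B - S) \<noteq> {}"
      using insert.IH insert.prems(1) by blast
    then show ?thesis by blast
  qed
qed

lemma min_cover_exists:
  assumes "is_cpwl p"
  shows "\<exists>U. cpwl_cover p U \<and> card U = min_pieces p"
proof -
  obtain U where "cpwl_cover p U" using assms unfolding is_cpwl_def by blast
  then have "\<exists>m U. cpwl_cover p U \<and> card U = m" by blast
  then show ?thesis unfolding min_pieces_def by (rule LeastI_ex)
qed

lemma min_cover_interior:
  assumes "cpwl_cover p U" "card U = min_pieces p" "S \<in> U"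
  shows "interior S \<noteq> {}"
proof
  assume iS: "interior S = {}"
  define U' where "U' = U - {S}"
  have fin: "finite U" using assms(1) unfolding cpwl_cover_def by blast
  have "closed (\<Union>U')" using assms(1) fin unfolding cpwl_cover_def U'_def by auto
  then have "open (- \<Union>U')" by auto
  moreover have "- \<Union>U' \<subseteq> S" using assms(1,3) unfolding cpwl_cover_def U'_def by auto
  ultimately have "- \<Union>U' \<subseteq> interior S" by (rule interior_maximal[rotated])
  then have "\<Union>U' = UNIV" using iS by auto
  then have "cpwl_cover p U'" using assms(1) unfolding cpwl_cover_def U'_def by auto
  moreover have "card U' < card U" using fin assms(3) unfolding U'_def
    by (meson card_Diff1_less)
  ultimately have "card U' < (LEAST m. \<exists>U. cpwl_cover p U \<and> card U = m)"
    using assms(2) unfolding min_pieces_def by simp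
  then show False using not_less_Least \<open>cpwl_cover p U'\<close> by blast
qed

lemma component_open:
  assumes "g \<in> linear_components p"
  shows "affine_fun g \<and> (\<exists>W. open W \<and> W \<noteq> {} \<and> (\<forall>x\<in>W. g x = p x))"
proof -
  obtain U V where U: "cpwl_cover p U" "card U = min_pieces p" and V: "V \<subseteq> U" "V \<noteq> {}"
    "\<forall>x\<in>\<Union>V. g x = p x" and ag: "affine_fun g"
    using assms unfolding linear_components_def by blast
  obtain S where "S \<in> V" using V by blast
  then have "interior S \<noteq> {}" using min_cover_interior[OF U] V by blast
  moreover have "\<forall>x\<in>interior S. g x = p x" using V(3) \<open>S \<in> V\<close> interior_subset by blast
  ultimately show ?thesis using ag by blast
qed

lemma p_in_components:
  assumes "is_cpwl p"
  shows "\<exists>g\<in>linear_components p. g x = p x"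
proof -
  obtain U where U: "cpwl_cover p U" "card U = min_pieces p" using min_cover_exists[OF assms] by blast
  then obtain S where S: "S \<in> U" "x \<in> S" unfolding cpwl_cover_def by blast
  then obtain g where g: "affine_fun g" "\<forall>y\<in>S. p y = g y" using U unfolding cpwl_cover_def affine_on_set_def by blast
  have "\<exists>V. V \<subseteq> U \<and> V \<noteq> {} \<and> (\<forall>x\<in>\<Union>V. g x = p x)"
    using S g by (intro exI[of _ "{S}"]) auto
  then have "g \<in> linear_components p" unfolding linear_components_def
    using U g by blast
  then show ?thesis using g S by auto
qed

lemma affine_fun_continuous:
  assumes "affine_fun f" shows "continuous_on UNIV f"
proof -
  obtain a b where "\<And>x. f x = inner a x + b" using assms unfolding affine_fun_def by blast
  then have "f = (\<lambda>x. inner a x + b)" by auto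
  then show ?thesis by (simp add: continuous_intros)
qed

lemma cpwl_continuous:
  assumes "is_cpwl p" shows "continuous_on UNIV p"
proof -
  obtain U where U: "cpwl_cover p U" using assms unfolding is_cpwl_def by blast
  have "continuous_on (\<Union>S\<in>U. S) p"
  proof (rule continuous_on_closed_Union)
    show "finite U" using U unfolding cpwl_cover_def by blast
    show "closed S" if "S \<in> U" for S using U that unfolding cpwl_cover_def by blast
    show "continuous_on S p" if "S \<in> U" for S
    proof -
      have "affine_on_set p S" using U that by (simp add: cpwl_cover_def)
      then obtain g where g: "affine_fun g" "\<forall>y\<in>S. p y = g y" unfolding affine_on_set_def by blast
      have "continuous_on S g" by (rule continuous_on_subset[OF affine_fun_continuous[OF g(1)]]) simp
      then show ?thesis by (rule continuous_on_eq) (use g(2) in simp)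
    qed
  qed
  moreover have "(\<Union>S\<in>U. S) = UNIV" using U unfolding cpwl_cover_def by simp
  ultimately show ?thesis by simp
qed

lemma components_finite:
  assumes "is_cpwl p" shows "finite (linear_components p)"
proof -
  obtain U where U: "cpwl_cover p U" using assms unfolding is_cpwl_def by blast
  define gS where "gS = (\<lambda>S. SOME f. affine_fun f \<and> (\<forall>x\<in>S. p x = f x))"
  have gS: "affine_fun (gS S) \<and> (\<forall>x\<in>S. p x = gS S x)" if "S \<in> U" for S
  proof -
    have "affine_on_set p S" using U that by (simp add: cpwl_cover_def)
    then have "\<exists>f. affine_fun f \<and> (\<forall>x\<in>S. p x = f x)" unfolding affine_on_set_def by blast
    from someI_ex[OF this] show ?thesis unfolding gS_def .
  qed
  have "linear_components p \<subseteq> gS ` U"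
  proof
    fix g assume g: "g \<in> linear_components p"
    then obtain W where W: "open W" "W \<noteq> {}" "\<forall>x\<in>W. g x = p x" and ag: "affine_fun g"
      using component_open by blast
    obtain S where S: "S \<in> U" "interior S \<inter> W \<noteq> {}"
      using closed_cover_interior[of U W] U W unfolding cpwl_cover_def by auto
    have "g = gS S"
    proof (rule affine_fun_eq_on_open[OF ag _ _ S(2)])
      show "affine_fun (gS S)" using gS S by blast
      show "open (interior S \<inter> W)" using W by auto
      show "\<forall>x\<in>interior S \<inter> W. g x = gS S x" using W gS[OF S(1)] interior_subset by fastforce
    qed
    then show "g \<in> gS ` U" using S by blast
  qed
  moreover have "finite U" using U unfolding cpwl_cover_def by blast
  ultimately show ?thesis using finite_subset by blast
qed

lemma part1:
  assumes "is_cpwl p" "Q \<in> convex_covers p" "finite Q"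
  shows "card (linear_components p) \<le> card Q"
proof -
  define P where "P = (\<lambda>g S. S \<in> Q \<and> (\<exists>W. open W \<and> W \<noteq> {} \<and> W \<subseteq> S \<and> (\<forall>x\<in>W. g x = p x)))"
  have "\<forall>g\<in>linear_components p. \<exists>S. P g S"
  proof
    fix g assume g: "g \<in> linear_components p"
    then obtain W where W: "open W" "W \<noteq> {}" "\<forall>x\<in>W. g x = p x"
      using component_open by blast
    have "\<forall>S\<in>Q. closed S" using assms(2) by (simp add: convex_covers_def)
    moreover have "W \<subseteq> \<Union>Q" using assms(2) by (simp add: convex_covers_def)
    ultimately obtain S where S: "S \<in> Q" "interior S \<inter> W \<noteq> {}"
      using closed_cover_interior[of Q W] assms(3) W by blast
    have "P g S" unfolding P_def
      using S W interior_subset by (intro conjI exI[of _ "interior S \<inter> W"]) auto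
    then show "\<exists>S. P g S" ..
  qed
  from bchoice[OF this] obtain ch where ch: "\<forall>g\<in>linear_components p. P g (ch g)" by blast
  have "inj_on ch (linear_components p)"
  proof (rule inj_onI)
    fix g g' assume g: "g \<in> linear_components p" and g': "g' \<in> linear_components p" and eq: "ch g = ch g'"
    have "ch g \<in> Q" using ch g by (simp add: P_def)
    then have "affine_on_set p (ch g)" using assms(2) by (simp add: convex_covers_def)
    then obtain h where h: "affine_fun h" "\<forall>x\<in>ch g. p x = h x"
      unfolding affine_on_set_def by blast
    have gh: "f = h" if f: "f \<in> linear_components p" "ch f = ch g" for f
    proof -
      obtain W where W: "open W" "W \<noteq> {}" "W \<subseteq> ch f" "\<forall>x\<in>W. f x = p x"
        using ch f(1) unfolding P_def by blast
      have "affine_fun f" using component_open[OF f(1)] by blast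
      moreover have "\<forall>x\<in>W. f x = h x" using W h(2) f(2) by auto
      ultimately show ?thesis using affine_fun_eq_on_open[OF _ h(1) W(1,2)] by blast
    qed
    have "g = h" using gh[OF g] by simp
    moreover have "g' = h" using gh[OF g'] eq by simp
    ultimately show "g = g'" by simp
  qed
  moreover have "ch ` linear_components p \<subseteq> Q" using ch by (auto simp: P_def)
  ultimately show ?thesis using card_inj_on_le assms(3) by blast
qed


lemma dep_family:
  fixes v :: "'i \<Rightarrow> 'a::euclidean_space"
  assumes "finite J" "card J > DIM('a)"
  shows "\<exists>c. (\<exists>q\<in>J. c q \<noteq> 0) \<and> (\<Sum>q\<in>J. c q *\<^sub>R v q) = 0"
proof (cases "inj_on v J")
  case True
  then have "card (v ` J) > DIM('a)" using assms by (simp add: card_image)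
  then have "dependent (v ` J)" using dependent_biggerset by blast
  then obtain u where u: "\<exists>w\<in>v ` J. u w \<noteq> 0" "(\<Sum>w\<in>v ` J. u w *\<^sub>R w) = 0"
    using dependent_finite[of "v ` J"] assms(1) by auto
  have "(\<Sum>q\<in>J. u (v q) *\<^sub>R v q) = (\<Sum>w\<in>v ` J. u w *\<^sub>R w)"
    using sum.reindex[OF True, of "\<lambda>w. u w *\<^sub>R w"] by simp
  then show ?thesis using u by (intro exI[of _ "\<lambda>q. u (v q)"]) auto
next
  case False
  then obtain q1 q2 where q: "q1 \<in> J" "q2 \<in> J" "q1 \<noteq> q2" "v q1 = v q2"
    unfolding inj_on_def by blast
  define c where "c = (\<lambda>q. (if q = q1 then 1 else 0) - (if q = q2 then 1 else (0::real)))"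
  have "(\<Sum>q\<in>J. c q *\<^sub>R v q) = (\<Sum>q\<in>J. (if q = q1 then v q else 0)) - (\<Sum>q\<in>J. (if q = q2 then v q else 0))"
    unfolding c_def by (simp add: scaleR_diff_left sum_subtractf if_distrib[of "\<lambda>t. t *\<^sub>R _"] cong: if_cong)
  also have "\<dots> = 0" using q assms(1) by (simp add: sum.delta)
  finally show ?thesis using q by (intro exI[of _ c]) (auto simp: c_def)
qed

lemma interior_Union_closed_empty:
  fixes Z :: "'i \<Rightarrow> 'a::topological_space set"
  assumes "finite I" "\<And>i. i \<in> I \<Longrightarrow> closed (Z i)" "\<And>i. i \<in> I \<Longrightarrow> interior (Z i) = {}"
  shows "interior (\<Union>i\<in>I. Z i) = {}"
  using assms
proof (induction I rule: finite_induct)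
  case empty then show ?case by simp
next
  case (insert i I)
  have "interior (Z i \<union> (\<Union>j\<in>I. Z j)) = interior (Z i)"
    by (rule interior_closed_Un_empty_interior) (use insert in auto)
  then show ?case using insert by simp
qed


context
  fixes p :: "real^'n \<Rightarrow> real" and k :: nat and e :: "nat \<Rightarrow> real^'n \<Rightarrow> real"
    and a :: "nat \<Rightarrow> real^'n" and b :: "nat \<Rightarrow> real"
  assumes cp: "is_cpwl p" and bij: "bij_betw e {..<k} (linear_components p)"
    and ab: "\<And>i x. i < k \<Longrightarrow> e i x = inner (a i) x + b i"
begin

definition "hh q x = e (fst q) x - e (snd q) x"
definition "XX = {(i,j). i < j \<and> j < k}"
definition "GG = {x. \<forall>q\<in>XX. hh q x \<noteq> 0}"
definition "Ts x = {q\<in>XX. hh q x > 0}"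
definition "FF = Ts ` GG"
definition "CC T = {x. \<forall>q\<in>XX. (q \<in> T \<longrightarrow> 0 \<le> hh q x) \<and> (q \<notin> T \<longrightarrow> hh q x \<le> 0)}"
definition "II T = {x. \<forall>q\<in>XX. (q \<in> T \<longrightarrow> 0 < hh q x) \<and> (q \<notin> T \<longrightarrow> hh q x < 0)}"

lemma XX_lt: "q \<in> XX \<Longrightarrow> fst q < k \<and> snd q < k \<and> fst q < snd q"
  by (auto simp: XX_def)

lemma finite_XX: "finite XX"
  by (rule finite_subset[of _ "{..<k} \<times> {..<k}"]) (auto simp: XX_def)

lemma e_comb: "i < k \<Longrightarrow> e i ((1 - u) *\<^sub>R x + u *\<^sub>R y) = (1 - u) * e i x + u * e i y"
  by (simp add: ab inner_add_right algebra_simps)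

lemma hh_comb: "q \<in> XX \<Longrightarrow> hh q ((1 - u) *\<^sub>R x + u *\<^sub>R y) = (1 - u) * hh q x + u * hh q y"
proof -
  assume q: "q \<in> XX"
  have "hh q ((1 - u) *\<^sub>R x + u *\<^sub>R y) = ((1 - u) * e (fst q) x + u * e (fst q) y) - ((1 - u) * e (snd q) x + u * e (snd q) y)"
    unfolding hh_def using XX_lt[OF q] by (simp only: e_comb)
  then show ?thesis by (simp add: hh_def algebra_simps)
qed

lemma e_affine: "i < k \<Longrightarrow> affine_fun (e i)"
  unfolding affine_fun_def using ab by blast

lemma e_cont: "i < k \<Longrightarrow> continuous_on UNIV (e i)"
  using e_affine affine_fun_continuous by blast

lemma hh_cont: "q \<in> XX \<Longrightarrow> continuous_on UNIV (hh q)"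
proof -
  assume q: "q \<in> XX"
  have "hh q = (\<lambda>x. e (fst q) x - e (snd q) x)" by (simp add: hh_def fun_eq_iff)
  then show ?thesis using e_cont XX_lt[OF q] by (simp add: continuous_on_diff)
qed

lemma e_inj: "i < k \<Longrightarrow> j < k \<Longrightarrow> e i = e j \<Longrightarrow> i = j"
  using bij unfolding bij_betw_def inj_on_def by blast

lemma p_e: "\<exists>i<k. p x = e i x"
proof -
  obtain g where "g \<in> linear_components p" "g x = p x" using p_in_components[OF cp] by blast
  then obtain i where "i < k" "g = e i" using bij unfolding bij_betw_def by auto
  then show ?thesis using \<open>g x = p x\<close> by auto
qed

lemma distinct_GG: "x \<in> GG \<Longrightarrow> i < k \<Longrightarrow> j < k \<Longrightarrow> i \<noteq> j \<Longrightarrow> e i x \<noteq> e j x"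
proof -
  assume x: "x \<in> GG" and ij: "i < k" "j < k" "i \<noteq> j"
  show ?thesis
  proof (cases "i < j")
    case True
    then have "(i, j) \<in> XX" using ij by (simp add: XX_def)
    then show ?thesis using x by (auto simp: GG_def hh_def)
  next
    case False
    then have "(j, i) \<in> XX" using ij by (simp add: XX_def)
    then show ?thesis using x by (auto simp: GG_def hh_def)
  qed
qed

lemma closure_GG: "closure GG = UNIV"
proof -
  define Z where "Z q = {x. hh q x = 0}" for q
  have GG: "GG = - (\<Union>q\<in>XX. Z q)" by (auto simp: GG_def Z_def)
  have cl: "closed (Z q)" if "q \<in> XX" for q
    unfolding Z_def using closed_Collect_eq[OF hh_cont[OF that] continuous_on_const] by simp
  have int: "interior (Z q) = {}" if q: "q \<in> XX" for q
  proof (rule ccontr)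
    assume ne: "interior (Z q) \<noteq> {}"
    have "e (fst q) = e (snd q)"
    proof (rule affine_fun_eq_on_open[OF _ _ open_interior ne])
      show "affine_fun (e (fst q))" "affine_fun (e (snd q))" using XX_lt[OF q] e_affine by auto
      show "\<forall>x\<in>interior (Z q). e (fst q) x = e (snd q) x"
        using interior_subset[of "Z q"] by (auto simp: Z_def hh_def)
    qed
    then have "fst q = snd q" using e_inj XX_lt[OF q] by blast
    then show False using XX_lt[OF q] by simp
  qed
  have "interior (\<Union>q\<in>XX. Z q) = {}"
    by (rule interior_Union_closed_empty) (use finite_XX cl int in auto)
  then show ?thesis unfolding GG closure_complement by simp
qed

lemma CC_closed: "closed (CC T)"
proof -
  have "CC T = (\<Inter>q\<in>XX. {x. (q \<in> T \<longrightarrow> 0 \<le> hh q x) \<and> (q \<notin> T \<longrightarrow> hh q x \<le> 0)})"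
    by (auto simp: CC_def)
  moreover have "closed {x. (q \<in> T \<longrightarrow> 0 \<le> hh q x) \<and> (q \<notin> T \<longrightarrow> hh q x \<le> 0)}" if q: "q \<in> XX" for q
  proof (cases "q \<in> T")
    case True
    then show ?thesis using closed_Collect_le[OF continuous_on_const hh_cont[OF q], of 0] by simp
  next
    case False
    then show ?thesis using closed_Collect_le[OF hh_cont[OF q] continuous_on_const, of 0] by simp
  qed
  ultimately show ?thesis by auto
qed

lemma II_open: "open (II T)"
proof -
  have "II T = (\<Inter>q\<in>XX. {x. (q \<in> T \<longrightarrow> 0 < hh q x) \<and> (q \<notin> T \<longrightarrow> hh q x < 0)})"
    by (auto simp: II_def)
  moreover have "open {x. (q \<in> T \<longrightarrow> 0 < hh q x) \<and> (q \<notin> T \<longrightarrow> hh q x < 0)}" if q: "q \<in> XX" for q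
  proof (cases "q \<in> T")
    case True
    then show ?thesis using open_Collect_less[OF continuous_on_const hh_cont[OF q], of 0] by simp
  next
    case False
    then show ?thesis using open_Collect_less[OF hh_cont[OF q] continuous_on_const, of 0] by simp
  qed
  ultimately show ?thesis using finite_XX by auto
qed

lemma CC_convex: "convex (CC T)"
  unfolding convex_alt
proof (intro ballI allI impI)
  fix x y and u :: real assume x: "x \<in> CC T" and y: "y \<in> CC T" and u: "0 \<le> u \<and> u \<le> 1"
  show "(1 - u) *\<^sub>R x + u *\<^sub>R y \<in> CC T"
    unfolding CC_def
  proof (intro CollectI ballI conjI impI)
    fix q assume q: "q \<in> XX"
    have hx: "q \<in> T \<longrightarrow> 0 \<le> hh q x" "q \<notin> T \<longrightarrow> hh q x \<le> 0" using x q by (auto simp: CC_def)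
    have hy: "q \<in> T \<longrightarrow> 0 \<le> hh q y" "q \<notin> T \<longrightarrow> hh q y \<le> 0" using y q by (auto simp: CC_def)
    have u1: "0 \<le> 1 - u" using u by simp
    show "0 \<le> hh q ((1 - u) *\<^sub>R x + u *\<^sub>R y)" if "q \<in> T"
      using hx hy that u u1 by (simp add: hh_comb[OF q])
    show "hh q ((1 - u) *\<^sub>R x + u *\<^sub>R y) \<le> 0" if "q \<notin> T"
      using hx hy that u u1 by (simp add: hh_comb[OF q] add_nonpos_nonpos mult_nonneg_nonpos)
  qed
qed

lemma II_convex: "convex (II T)"
  unfolding convex_alt
proof (intro ballI allI impI)
  fix x y and u :: real assume x: "x \<in> II T" and y: "y \<in> II T" and u: "0 \<le> u \<and> u \<le> 1"
  show "(1 - u) *\<^sub>R x + u *\<^sub>R y \<in> II T"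
    unfolding II_def
  proof (intro CollectI ballI conjI impI)
    fix q assume q: "q \<in> XX"
    have hx: "q \<in> T \<longrightarrow> 0 < hh q x" "q \<notin> T \<longrightarrow> hh q x < 0" using x q by (auto simp: II_def)
    have hy: "q \<in> T \<longrightarrow> 0 < hh q y" "q \<notin> T \<longrightarrow> hh q y < 0" using y q by (auto simp: II_def)
    show "0 < hh q ((1 - u) *\<^sub>R x + u *\<^sub>R y)" if "q \<in> T"
    proof -
      have "0 < hh q x" "0 < hh q y" using hx hy that by auto
      then have "0 < (1 - u) * hh q x + u * hh q y" using u
        by (smt (verit) mult_nonneg_nonneg mult_pos_pos)
      then show ?thesis by (simp add: hh_comb[OF q])
    qed
    show "hh q ((1 - u) *\<^sub>R x + u *\<^sub>R y) < 0" if "q \<notin> T"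
    proof -
      have "hh q x < 0" "hh q y < 0" using hx hy that by auto
      then have "(1 - u) * hh q x + u * hh q y < 0" using u
        by (smt (verit) mult_nonneg_nonpos mult_pos_neg)
      then show ?thesis by (simp add: hh_comb[OF q])
    qed
  qed
qed

lemma CC_affine:
  assumes T: "T \<in> FF"
  shows "affine_on_set p (CC T)"
proof -
  obtain y0 where y0: "y0 \<in> GG" "T = Ts y0" using T by (auto simp: FF_def)
  have y0I: "y0 \<in> II T" using y0 by (auto simp: II_def Ts_def GG_def)
  have IG: "II T \<subseteq> GG" by (auto simp: II_def GG_def)
  obtain i0 where i0: "i0 < k" "p y0 = e i0 y0" using p_e by blast
  have pc: "continuous_on UNIV p" using cpwl_continuous[OF cp] .
  define A where "A = II T \<inter> {x. p x = e i0 x}"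
  have clA: "closed {x. p x = e i0 x}" by (rule closed_Collect_eq[OF pc e_cont[OF i0(1)]])
  have "connected (II T)" using II_convex convex_connected by blast
  moreover have "closedin (top_of_set (II T)) A" unfolding A_def by (rule closedin_closed_Int[OF clA])
  moreover have "openin (top_of_set (II T)) A"
  proof -
    define R where "R = (\<Union>i\<in>{..<k} - {i0}. {x. p x = e i x})"
    have "closed R" unfolding R_def
      by (rule closed_UN) (auto intro!: closed_Collect_eq[OF pc e_cont])
    moreover have "A = II T \<inter> - R"
    proof (intro equalityI subsetI)
      fix x assume x: "x \<in> A"
      then have xG: "x \<in> GG" using IG by (auto simp: A_def)
      have "x \<notin> R"
      proof
        assume "x \<in> R"
        then obtain i where "i < k" "i \<noteq> i0" "p x = e i x" by (auto simp: R_def)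
        then show False using x distinct_GG[OF xG \<open>i < k\<close> i0(1)] by (auto simp: A_def)
      qed
      then show "x \<in> II T \<inter> - R" using x by (auto simp: A_def)
    next
      fix x assume x: "x \<in> II T \<inter> - R"
      obtain i where "i < k" "p x = e i x" using p_e by blast
      then have "i = i0" using x by (auto simp: R_def)
      then show "x \<in> A" using x \<open>p x = e i x\<close> by (auto simp: A_def)
    qed
    ultimately show ?thesis using openin_open_Int[of "- R" "II T"] by auto
  qed
  ultimately have "A = {} \<or> A = II T" unfolding connected_clopen by blast
  moreover have "y0 \<in> A" using y0I i0 by (auto simp: A_def)
  ultimately have AI: "A = II T" by blast
  have "\<forall>z\<in>CC T. p z = e i0 z"
  proof
    fix z assume z: "z \<in> CC T"
    define t where "t n = inverse (real (Suc n))" for n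
    define w where "w n = (1 - t n) *\<^sub>R z + t n *\<^sub>R y0" for n
    have t: "0 < t n" "t n \<le> 1" for n by (auto simp: t_def field_simps)
    have "w n \<in> II T" for n
      unfolding II_def
    proof (intro CollectI ballI conjI impI)
      fix q assume q: "q \<in> XX"
      have hw: "hh q (w n) = (1 - t n) * hh q z + t n * hh q y0" unfolding w_def by (rule hh_comb[OF q])
      have t1: "0 \<le> 1 - t n" using t(2)[of n] by simp
      show "0 < hh q (w n)" if "q \<in> T"
      proof -
        have "0 \<le> hh q z" using z q that by (auto simp: CC_def)
        moreover have "0 < hh q y0" using y0I q that by (auto simp: II_def)
        ultimately show ?thesis unfolding hw using t[of n] t1
          by (smt (verit) mult_nonneg_nonneg mult_pos_pos)
      qed
      show "hh q (w n) < 0" if "q \<notin> T"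
      proof -
        have "hh q z \<le> 0" using z q that by (auto simp: CC_def)
        moreover have "hh q y0 < 0" using y0I q that by (auto simp: II_def)
        ultimately show ?thesis unfolding hw using t[of n] t1
          by (smt (verit) mult_nonneg_nonpos mult_pos_neg)
      qed
    qed
    then have "w n \<in> {x. p x = e i0 x}" for n using AI by (auto simp: A_def)
    moreover have "w \<longlonglongrightarrow> z"
    proof -
      have "t \<longlonglongrightarrow> 0" unfolding t_def by (rule LIMSEQ_inverse_real_of_nat)
      then have "(\<lambda>n. (1 - t n) *\<^sub>R z + t n *\<^sub>R y0) \<longlonglongrightarrow> (1 - 0) *\<^sub>R z + 0 *\<^sub>R y0"
        by (intro tendsto_intros)
      moreover have "w = (\<lambda>n. (1 - t n) *\<^sub>R z + t n *\<^sub>R y0)" by (simp add: w_def fun_eq_iff)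
      ultimately show ?thesis by simp
    qed
    ultimately have "z \<in> {x. p x = e i0 x}" using closed_sequentially[OF clA] by blast
    then show "p z = e i0 z" by simp
  qed
  then show ?thesis unfolding affine_on_set_def using e_affine[OF i0(1)] by auto
qed

lemma finite_FF: "finite FF"
  by (rule finite_subset[of _ "Pow XX"]) (auto simp: FF_def Ts_def finite_XX)

lemma cover_UNIV: "\<Union>(CC ` FF) = UNIV"
proof -
  have "GG \<subseteq> \<Union>(CC ` FF)"
  proof
    fix x assume x: "x \<in> GG"
    then have "Ts x \<in> FF" by (simp add: FF_def)
    moreover have "x \<in> CC (Ts x)" by (auto simp: CC_def Ts_def)
    ultimately show "x \<in> \<Union>(CC ` FF)" by blast
  qed
  moreover have "closed (\<Union>(CC ` FF))" using finite_FF CC_closed by auto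
  ultimately have "closure GG \<subseteq> \<Union>(CC ` FF)" by (rule closure_minimal)
  then show ?thesis using closure_GG by auto
qed

lemma hh_lin: "q \<in> XX \<Longrightarrow> hh q x = inner (a (fst q) - a (snd q)) x + (b (fst q) - b (snd q))"
  using XX_lt[of q] by (simp add: hh_def ab inner_diff_left)

lemma VC:
  assumes J: "J \<subseteq> XX" and sh: "shatters FF J"
  shows "card J \<le> CARD('n)"
proof (rule ccontr)
  assume "\<not> card J \<le> CARD('n)"
  then have cJ: "card J > DIM(real^'n)" by simp
  have finJ: "finite J" using J finite_XX finite_subset by blast
  define \<alpha> where "\<alpha> q = a (fst q) - a (snd q)" for q
  define \<beta> where "\<beta> q = b (fst q) - b (snd q)" for q
  obtain c where c: "\<exists>q\<in>J. c q \<noteq> 0" "(\<Sum>q\<in>J. c q *\<^sub>R \<alpha> q) = 0"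
    using dep_family[OF finJ cJ, of \<alpha>] by blast
  define c' where "c' = (if 0 \<le> (\<Sum>q\<in>J. c q * \<beta> q) then c else (\<lambda>q. - c q))"
  have c'1: "\<exists>q\<in>J. c' q \<noteq> 0" using c(1) by (auto simp: c'_def)
  have c'2: "(\<Sum>q\<in>J. c' q *\<^sub>R \<alpha> q) = 0" using c(2) by (auto simp: c'_def sum_negf)
  have c'3: "0 \<le> (\<Sum>q\<in>J. c' q * \<beta> q)" by (auto simp: c'_def sum_negf)
  define B where "B = {q\<in>J. c' q < 0}"
  have "B \<subseteq> J" by (auto simp: B_def)
  then obtain S where "S \<in> FF" "S \<inter> J = B" using sh unfolding shatters_def by blast
  then obtain x where x: "x \<in> GG" "S = Ts x" by (auto simp: FF_def)
  have trm: "c' q * hh q x \<le> 0 \<and> (c' q \<noteq> 0 \<longrightarrow> c' q * hh q x < 0)" if q: "q \<in> J" for q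
  proof -
    have qX: "q \<in> XX" using q J by blast
    have nz: "hh q x \<noteq> 0" using x(1) qX by (auto simp: GG_def)
    have "q \<in> B \<longleftrightarrow> 0 < hh q x" using \<open>S \<inter> J = B\<close> x(2) q qX by (auto simp: Ts_def)
    then have "c' q < 0 \<longleftrightarrow> 0 < hh q x" using q by (auto simp: B_def)
    then show ?thesis using nz
      by (smt (verit) mult_neg_pos mult_pos_neg mult_nonneg_nonpos mult_nonpos_nonneg)
  qed
  have "(\<Sum>q\<in>J. c' q * hh q x) = (\<Sum>q\<in>J. c' q * (inner (\<alpha> q) x + \<beta> q))"
    using J by (intro sum.cong) (auto simp: hh_lin \<alpha>_def \<beta>_def)
  also have "\<dots> = inner (\<Sum>q\<in>J. c' q *\<^sub>R \<alpha> q) x + (\<Sum>q\<in>J. c' q * \<beta> q)"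
    by (simp add: inner_sum_left distrib_left sum.distrib)
  also have "\<dots> \<ge> 0" using c'2 c'3 by simp
  finally have ge: "0 \<le> (\<Sum>q\<in>J. c' q * hh q x)" .
  obtain q0 where q0: "q0 \<in> J" "c' q0 \<noteq> 0" using c'1 by blast
  have "0 < (\<Sum>q\<in>J. - (c' q * hh q x))"
    by (rule sum_pos2[OF finJ q0(1)]) (use trm q0 in auto)
  then show False using ge by (simp add: sum_negf)
qed

lemma card_FF_sum: "card FF \<le> (\<Sum>i=0..CARD('n). (k choose 2) choose i)"
proof -
  have FX: "FF \<subseteq> Pow XX" by (auto simp: FF_def Ts_def)
  have "card FF \<le> card {J. J \<subseteq> XX \<and> shatters FF J}" by (rule pajor[OF finite_XX FX])
  also have "\<dots> \<le> card {J. J \<subseteq> XX \<and> card J \<le> CARD('n)}"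
    by (rule card_mono) (use finite_XX VC in auto)
  also have "\<dots> = (\<Sum>i=0..CARD('n). card XX choose i)" by (rule card_subsets_le[OF finite_XX])
  also have "card XX = k choose 2" unfolding XX_def by (rule card_pairs)
  finally show ?thesis .
qed

definition "rk x i = (if i < k then card {j. j < k \<and> e j x < e i x} else i)"

lemma rk_mono:
  assumes "i < k" "j < k" "e j x < e i x"
  shows "rk x j < rk x i"
proof -
  have "{l. l < k \<and> e l x < e j x} \<subset> {l. l < k \<and> e l x < e i x}"
  proof
    show "{l. l < k \<and> e l x < e j x} \<subseteq> {l. l < k \<and> e l x < e i x}" using assms(3) by auto
    show "{l. l < k \<and> e l x < e j x} \<noteq> {l. l < k \<and> e l x < e i x}" using assms by auto
  qed
  then have "card {l. l < k \<and> e l x < e j x} < card {l. l < k \<and> e l x < e i x}"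
    by (rule psubset_card_mono[rotated]) simp
  then show ?thesis using assms by (simp add: rk_def)
qed

lemma rk_iff:
  assumes "x \<in> GG" "i < k" "j < k"
  shows "rk x j < rk x i \<longleftrightarrow> e j x < e i x"
proof
  assume r: "rk x j < rk x i"
  show "e j x < e i x"
  proof (rule ccontr)
    assume "\<not> e j x < e i x"
    then have "e i x < e j x \<or> e i x = e j x" by auto
    then show False
    proof
      assume "e i x < e j x" then show False using rk_mono[OF assms(3,2), of x] r by simp
    next
      assume "e i x = e j x"
      then have "i = j" using distinct_GG[OF assms] by blast
      then show False using r by simp
    qed
  qed
qed (rule rk_mono[OF assms(2,3)])

lemma rk_perm:
  assumes x: "x \<in> GG"
  shows "rk x permutes {..<k}"
proof (rule bij_imp_permutes)
  have inj: "inj_on (rk x) {..<k}"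
  proof (rule inj_onI)
    fix i j assume i: "i \<in> {..<k}" and j: "j \<in> {..<k}" and eq: "rk x i = rk x j"
    show "i = j"
    proof (rule ccontr)
      assume "i \<noteq> j"
      then have "e i x \<noteq> e j x" using distinct_GG[OF x] i j by auto
      then have "e i x < e j x \<or> e j x < e i x" by auto
      then show False using rk_mono i j eq by (metis lessThan_iff less_irrefl)
    qed
  qed
  have sub: "rk x ` {..<k} \<subseteq> {..<k}"
  proof
    fix y assume "y \<in> rk x ` {..<k}"
    then obtain i where i: "i < k" "y = rk x i" by auto
    have "{j. j < k \<and> e j x < e i x} \<subseteq> {..<k} - {i}" by auto
    then have "card {j. j < k \<and> e j x < e i x} \<le> card ({..<k} - {i})" by (intro card_mono) auto
    also have "\<dots> < k" using i by simp
    finally show "y \<in> {..<k}" using i by (simp add: rk_def)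
  qed
  have "rk x ` {..<k} = {..<k}" by (rule endo_inj_surj[OF _ sub inj]) simp
  then show "bij_betw (rk x) {..<k} {..<k}" using inj by (simp add: bij_betw_def)
  show "rk x i = i" if "i \<notin> {..<k}" for i using that by (simp add: rk_def)
qed

lemma Ts_rk:
  assumes x: "x \<in> GG"
  shows "Ts x = {q\<in>XX. rk x (snd q) < rk x (fst q)}"
proof -
  have "hh q x > 0 \<longleftrightarrow> rk x (snd q) < rk x (fst q)" if q: "q \<in> XX" for q
    using rk_iff[OF x, of "fst q" "snd q"] XX_lt[OF q] by (simp add: hh_def)
  then show ?thesis by (auto simp: Ts_def)
qed

lemma card_FF_fact: "card FF \<le> fact k"
proof -
  define \<Phi> where "\<Phi> \<pi> = {q\<in>XX. \<pi> (snd q) < \<pi> (fst q)}" for \<pi> :: "nat \<Rightarrow> nat"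
  have "FF = \<Phi> ` (rk ` GG)"
    unfolding FF_def \<Phi>_def image_image using Ts_rk by (intro image_cong) auto
  have sub: "rk ` GG \<subseteq> {\<pi>. \<pi> permutes {..<k}}" using rk_perm by auto
  have fin: "finite {\<pi>. \<pi> permutes {..<k}}" by (rule finite_permutations) simp
  have "card FF \<le> card (rk ` GG)"
    unfolding \<open>FF = \<Phi> ` (rk ` GG)\<close> by (rule card_image_le[OF finite_subset[OF sub fin]])
  also have "\<dots> \<le> card {\<pi>. \<pi> permutes {..<k}}"
    by (rule card_mono[OF fin sub])
  also have "\<dots> = fact k" by (rule card_permutations) auto
  finally show ?thesis .
qed

lemma part2_ctx: "\<exists>Q\<in>convex_covers p. finite Q \<and> card Q \<le> phi CARD('n) k"
proof -
  define Q where "Q = CC ` FF"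
  have "Q \<in> convex_covers p"
    unfolding convex_covers_def Q_def using CC_closed CC_convex CC_affine cover_UNIV by auto
  moreover have "finite Q" unfolding Q_def using finite_FF by simp
  moreover have "card Q \<le> card FF" unfolding Q_def using finite_FF by (rule card_image_le)
  moreover have "(k^2 - k) div 2 = k choose 2"
    by (simp add: choose_two power2_eq_square diff_mult_distrib2)
  ultimately show ?thesis using card_FF_sum card_FF_fact unfolding phi_def
    by (intro bexI[of _ Q]) auto
qed

end

theorem lemma1:
  fixes p :: "real^'n \<Rightarrow> real" and k :: nat
  assumes "is_cpwl p"
    and "card (linear_components p) = k"
  shows "(\<forall>Q\<in>convex_covers p. finite Q \<longrightarrow> k \<le> card Q)
       \<and> (\<exists>Q\<in>convex_covers p. finite Q \<and> card Q \<le> phi CARD('n) k)"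
proof
  show "\<forall>Q\<in>convex_covers p. finite Q \<longrightarrow> k \<le> card Q"
    using part1[OF assms(1)] assms(2) by blast
  have finL: "finite (linear_components p)" by (rule components_finite[OF assms(1)])
  obtain e where e: "bij_betw e {0..<k} (linear_components p)"
    using ex_bij_betw_nat_finite[OF finL] assms(2) by blast
  then have bij: "bij_betw e {..<k} (linear_components p)" by (simp add: atLeast0LessThan)
  have "\<forall>i. \<exists>a b. i < k \<longrightarrow> (\<forall>x. e i x = inner a x + b)"
  proof
    fix i
    show "\<exists>a b. i < k \<longrightarrow> (\<forall>x. e i x = inner a x + b)"
    proof (cases "i < k")
      case True
      then have "e i \<in> linear_components p" using bij by (auto simp: bij_betw_def)
      then have "affine_fun (e i)" by (simp add: linear_components_def)
      then show ?thesis unfolding affine_fun_def by blast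
    qed auto
  qed
  then obtain a b where ab: "\<forall>i. i < k \<longrightarrow> (\<forall>x. e i x = inner (a i) x + b i)" by metis
  show "\<exists>Q\<in>convex_covers p. finite Q \<and> card Q \<le> phi CARD('n) k"
    by (rule part2_ctx[OF assms(1) bij]) (use ab in blast)
qed

end
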